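(* Let $f=f(x_1,\ldots,x_n)$ be a positive non-canalyzing Boolean function with $k$ relevant variables such that for some $i\in[n]$ at least one of the restrictions $f_{|x_i=0}$, $f_{|x_i=1}$ is non-canalyzing. Then $f$ has at least $k+2$ extremal points.
   Context: $B=\{0,1\}$, $\preceq$ coordinatewise order. $f$ is positive if $f(\mathbf{x})=1$ and $\mathbf{x}\preceq\mathbf{y}$ imply $f(\mathbf{y})=1$. Extremal points are the $\preceq$-maximal false points and $\preceq$-minimal true points. $f_{|x_i=\alpha}$ is obtained by fixing $x_i=\alpha$; $x_i$ is relevant if $f_{|x_i=0}\not\equiv f_{|x_i=1}$. $f$ is canalyzing if for some $i$, $f_{|x_i=0}$ or $f_{|x_i=1}$ is constant. *)

theory Defs
  imports Main
begin

text \<open>A Boolean function of n variables is modelled as f :: bool list \<Rightarrow> bool,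
  considered on the points of B^n, i.e. lists of length n.\<close>

definition points :: "nat \<Rightarrow> bool list set" where
  "points n = {x. length x = n}"

definition leq :: "bool list \<Rightarrow> bool list \<Rightarrow> bool" where
  "leq x y \<longleftrightarrow> list_all2 (\<le>) x y"

definition positive :: "nat \<Rightarrow> (bool list \<Rightarrow> bool) \<Rightarrow> bool" where
  "positive n f \<longleftrightarrow>
     (\<forall>x\<in>points n. \<forall>y\<in>points n. f x \<and> leq x y \<longrightarrow> f y)"

text \<open>Restriction f_{|x_i=a}: again a function of the n variables x_1..x_n
  (with x_i fixed to a).\<close>
definition restr :: "(bool list \<Rightarrow> bool) \<Rightarrow> nat \<Rightarrow> bool \<Rightarrow> bool list \<Rightarrow> bool" where
  "restr f i a = (\<lambda>x. f (x[i := a]))"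

definition const_on :: "nat \<Rightarrow> (bool list \<Rightarrow> bool) \<Rightarrow> bool" where
  "const_on n g \<longleftrightarrow> (\<exists>c. \<forall>x\<in>points n. g x = c)"

definition relevant :: "nat \<Rightarrow> (bool list \<Rightarrow> bool) \<Rightarrow> nat \<Rightarrow> bool" where
  "relevant n f i \<longleftrightarrow> i < n \<and> (\<exists>x\<in>points n. restr f i False x \<noteq> restr f i True x)"

definition canalyzing :: "nat \<Rightarrow> (bool list \<Rightarrow> bool) \<Rightarrow> bool" where
  "canalyzing n f \<longleftrightarrow>
     (\<exists>i<n. const_on n (restr f i False) \<or> const_on n (restr f i True))"

definition max_false :: "nat \<Rightarrow> (bool list \<Rightarrow> bool) \<Rightarrow> bool list \<Rightarrow> bool" where
  "max_false n f x \<longleftrightarrow> x \<in> points n \<and> \<not> f x \<and>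
     (\<forall>y\<in>points n. \<not> f y \<and> leq x y \<longrightarrow> y = x)"

definition min_true :: "nat \<Rightarrow> (bool list \<Rightarrow> bool) \<Rightarrow> bool list \<Rightarrow> bool" where
  "min_true n f x \<longleftrightarrow> x \<in> points n \<and> f x \<and>
     (\<forall>y\<in>points n. f y \<and> leq y x \<longrightarrow> y = x)"

definition extremal_points :: "nat \<Rightarrow> (bool list \<Rightarrow> bool) \<Rightarrow> bool list set" where
  "extremal_points n f = {x. max_false n f x \<or> min_true n f x}"

end

theory Submission
  imports Defs
begin

lemma leq_nth: "leq x y \<longleftrightarrow> length x = length y \<and> (\<forall>k<length x. x!k \<longrightarrow> y!k)"
  unfolding leq_def list_all2_conv_all_nth le_bool_def by auto

lemma points_finite: "finite (points n)"
proof -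
  have "points n = {xs. set xs \<subseteq> (UNIV::bool set) \<and> length xs = n}" by (auto simp: points_def)
  thus ?thesis using finite_lists_length_eq[of "UNIV::bool set" n] by simp
qed

lemma ext_sub: "extremal_points n f \<subseteq> points n"
  by (auto simp: extremal_points_def max_false_def min_true_def)

lemma ext_finite: "finite (extremal_points n f)"
  using ext_sub points_finite finite_subset by blast

lemma upd_points[simp]: "x[i:=b] \<in> points n \<longleftrightarrow> x \<in> points n"
  by (simp add: points_def)

lemma leq_refl[simp]: "leq x x" by (simp add: leq_nth)
lemma leq_trans: "leq x y \<Longrightarrow> leq y z \<Longrightarrow> leq x z" by (auto simp: leq_nth)
lemma leq_antisym: "leq x y \<Longrightarrow> leq y x \<Longrightarrow> x = y"
  by (auto simp: leq_nth intro: nth_equalityI)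

lemma nth_upd[simp]: "k < length x \<Longrightarrow> x[i:=b]!k = (if i = k then b else x!k)"
  by (cases "i < length x") (auto simp: nth_list_update list_update_beyond)

lemma leq_updF: "leq (x[i:=False]) x" by (auto simp: leq_nth split: if_splits)
lemma leq_updT: "leq x (x[i:=True])" by (auto simp: leq_nth split: if_splits)
lemma leq_upd_mono: "leq x y \<Longrightarrow> leq (x[i:=b]) (y[i:=b])" by (auto simp: leq_nth split: if_splits)
lemma leq_upd_FT: "leq (x[i:=False]) (x[i:=True])" by (auto simp: leq_nth split: if_splits)

definition cnt :: "bool list \<Rightarrow> nat" where "cnt x = length (filter id x)"

lemma leq_cnt: "list_all2 (\<le>) y m \<Longrightarrow> cnt y \<le> cnt m \<and> (cnt y = cnt m \<longrightarrow> y = m)"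
proof (induction rule: list_all2_induct)
  case Nil thus ?case by (simp add: cnt_def)
next
  case (Cons a b y m)
  thus ?case unfolding cnt_def le_bool_def
    by (cases a; cases b; auto simp: cnt_def)
qed

lemma leq_cnt_less: "leq y m \<Longrightarrow> y \<noteq> m \<Longrightarrow> cnt y < cnt m"
  using leq_cnt[of y m] unfolding leq_def by fastforce

lemma pos_mono: "positive n f \<Longrightarrow> x \<in> points n \<Longrightarrow> y \<in> points n \<Longrightarrow> leq x y \<Longrightarrow> f x \<Longrightarrow> f y"
  unfolding positive_def by blast

lemma min_true_exists:
  "f z \<Longrightarrow> z \<in> points n \<Longrightarrow> \<exists>m. min_true n f m \<and> leq m z"
proof (induction "cnt z" arbitrary: z rule: less_induct)
  case less
  show ?case
  proof (cases "min_true n f z")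
    case True thus ?thesis by auto
  next
    case False
    then obtain y where y: "y \<in> points n" "f y" "leq y z" "y \<noteq> z"
      using less.prems unfolding min_true_def by blast
    then have "cnt y < cnt z" using leq_cnt_less by blast
    from less.hyps[OF this y(2) y(1)] obtain m where "min_true n f m" "leq m y" by blast
    thus ?thesis using y(3) leq_trans by blast
  qed
qed

definition dual :: "(bool list \<Rightarrow> bool) \<Rightarrow> bool list \<Rightarrow> bool" where
  "dual f = (\<lambda>x. \<not> f (map Not x))"

lemma map_Not_points[simp]: "map Not x \<in> points n \<longleftrightarrow> x \<in> points n"
  by (simp add: points_def)

lemma Not_comp_Not[simp]: "(Not \<circ> Not) = id" by auto

lemma map_Not_Not[simp]: "map Not (map Not x) = x"
  by (induct x) auto

lemma leq_Not[simp]: "leq (map Not x) (map Not y) \<longleftrightarrow> leq y x"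
  by (auto simp: leq_nth)

lemma dual_dual[simp]: "dual (dual f) = f"
  by (simp add: dual_def)

lemma positive_dual: "positive n f \<Longrightarrow> positive n (dual f)"
  unfolding positive_def dual_def
  by (metis leq_Not map_Not_points)

lemma restr_dual: "restr (dual f) i a = dual (restr f i (\<not>a))"
  by (simp add: restr_def dual_def map_update)

lemma ex_points_Not: "(\<exists>x\<in>points n. P x) \<longleftrightarrow> (\<exists>x\<in>points n. P (map Not x))"
  by (metis map_Not_Not map_Not_points)

lemma all_points_Not: "(\<forall>x\<in>points n. P x) \<longleftrightarrow> (\<forall>x\<in>points n. P (map Not x))"
  by (metis map_Not_Not map_Not_points)

lemma const_on_dual[simp]: "const_on n (dual g) \<longleftrightarrow> const_on n g"
proof
  assume "const_on n (dual g)"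
  then obtain c where "\<forall>x\<in>points n. \<not> g (map Not x) = c" by (auto simp: const_on_def dual_def)
  hence "\<forall>x\<in>points n. g x = (\<not>c)" using all_points_Not[where P="\<lambda>x. g x = (\<not>c)"] by auto
  thus "const_on n g" by (auto simp: const_on_def)
next
  assume "const_on n g"
  then obtain c where "\<forall>x\<in>points n. g x = c" by (auto simp: const_on_def)
  hence "\<forall>x\<in>points n. dual g x = (\<not>c)" by (auto simp: dual_def)
  thus "const_on n (dual g)" by (auto simp: const_on_def)
qed

lemma relevant_dual[simp]: "relevant n (dual f) i \<longleftrightarrow> relevant n f i"
proof -
  have "(\<exists>x\<in>points n. restr (dual f) i False x \<noteq> restr (dual f) i True x) \<longleftrightarrow>
        (\<exists>x\<in>points n. restr f i False x \<noteq> restr f i True x)"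
    unfolding restr_dual by (subst ex_points_Not) (auto simp: dual_def)
  thus ?thesis by (simp add: relevant_def)
qed

lemma canal_dual[simp]: "canalyzing n (dual f) \<longleftrightarrow> canalyzing n f"
  unfolding canalyzing_def restr_dual by auto

lemma min_true_dual: "min_true n (dual f) x \<longleftrightarrow> max_false n f (map Not x)"
  unfolding min_true_def max_false_def dual_def
  by (metis leq_Not map_Not_Not map_Not_points)

lemma max_false_dual: "max_false n (dual f) x \<longleftrightarrow> min_true n f (map Not x)"
  unfolding min_true_def max_false_def dual_def
  by (metis leq_Not map_Not_Not map_Not_points)

lemma ext_dual: "extremal_points n (dual f) = map Not ` extremal_points n f"
proof -
  have "x \<in> extremal_points n (dual f) \<longleftrightarrow> map Not x \<in> extremal_points n f" for x
    by (auto simp: extremal_points_def min_true_dual max_false_dual)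
  thus ?thesis by (metis (no_types, lifting) image_eqI map_Not_Not subsetI subset_antisym imageE)
qed

lemma card_ext_dual[simp]: "card (extremal_points n (dual f)) = card (extremal_points n f)"
proof -
  have "inj (map Not)" by (metis injI map_Not_Not)
  thus ?thesis unfolding ext_dual by (rule card_image[OF inj_on_subset]) simp
qed

lemma max_false_exists:
  assumes "\<not> f z" "z \<in> points n" shows "\<exists>m. max_false n f m \<and> leq z m"
proof -
  have "dual f (map Not z)" using assms by (simp add: dual_def)
  from min_true_exists[of "dual f", OF this] assms obtain m where "min_true n (dual f) m" "leq m (map Not z)" by auto
  thus ?thesis by (metis min_true_dual leq_Not map_Not_Not)
qed

lemma upd_same_id: "i < length x \<Longrightarrow> x!i = b \<Longrightarrow> x[i:=b] = x"
  by (metis list_update_id)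

lemma upd_eq_nth: "i < length x \<Longrightarrow> x[i:=b] = x \<Longrightarrow> x!i = b"
  by (metis nth_list_update_eq)

lemma points_len: "x \<in> points n \<Longrightarrow> length x = n" by (simp add: points_def)

lemma positive_restr: assumes p: "positive n f" shows "positive n (restr f i a)"
  unfolding positive_def restr_def
proof (intro ballI impI)
  fix x y assume xy: "x \<in> points n" "y \<in> points n" "f (x[i:=a]) \<and> leq x y"
  thus "f (y[i:=a])" using pos_mono[OF p, of "x[i:=a]" "y[i:=a]"] leq_upd_mono by auto
qed

lemma restr_restr_same[simp]: "restr (restr f i a) i b = restr f i a"
  by (simp add: restr_def)

lemma relevant_restr_sub:
  assumes "relevant n (restr f i a) j" shows "relevant n f j" "j \<noteq> i"
proof -
  show "j \<noteq> i" using assms by (auto simp: relevant_def)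
  then obtain x where x: "x \<in> points n" "f (x[j:=False, i:=a]) \<noteq> f (x[j:=True, i:=a])" "j < n"
    using assms by (auto simp: relevant_def restr_def)
  have "x[j:=b, i:=a] = x[i:=a, j:=b]" for b using \<open>j\<noteq>i\<close> by (simp add: list_update_swap)
  hence "f (x[i:=a, j:=False]) \<noteq> f (x[i:=a, j:=True])" using x by simp
  moreover have "x[i:=a] \<in> points n" using x by simp
  ultimately show "relevant n f j" using x unfolding relevant_def restr_def by blast
qed

lemma step0_gen:
  assumes pos: "positive n f" and ilt: "i < n"
    and U: "U \<subseteq> extremal_points n f"
    and Uc: "\<forall>u\<in>U. u!i \<and> (f u \<or> \<not> max_false n (restr f i False) u)"
  shows "card (extremal_points n (restr f i False)) + card U \<le> card (extremal_points n f)"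
proof -
  define f0 where "f0 = restr f i False"
  define E0 where "E0 = extremal_points n f0"
  define \<phi> where "\<phi> = (\<lambda>x. if f x then x[i:=False] else x)"
  define \<psi> where "\<psi> = (\<lambda>z. if min_true n f0 z then z else z[i:=True])"
  have f0x: "f0 x = f (x[i:=False])" for x by (simp add: f0_def restr_def)
  have mt: "x!i = False \<and> f x \<and> min_true n f x" if "min_true n f0 x" for x
  proof -
    have xp: "x \<in> points n" and fx0: "f0 x" and mn: "\<forall>y\<in>points n. f0 y \<and> leq y x \<longrightarrow> y = x"
      using that by (auto simp: min_true_def)
    have lx: "length x = n" using xp points_len by auto
    have "f0 (x[i:=False])" using fx0 by (simp add: f0x)
    hence "x[i:=False] = x" using mn xp leq_updF by auto
    hence xi: "x!i = False" using upd_eq_nth ilt lx by metis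
    hence fx: "f x" using fx0 f0x upd_same_id ilt lx by metis
    have "min_true n f x"
      unfolding min_true_def
    proof (intro conjI ballI impI xp fx)
      fix y assume y: "y \<in> points n" "f y \<and> leq y x"
      have "y!i = False" using y xi ilt lx by (auto simp: leq_nth)
      hence "y[i:=False] = y" using y ilt points_len upd_same_id by metis
      hence "f0 y" using y f0x by metis
      thus "y = x" using mn y by auto
    qed
    thus ?thesis using xi fx by auto
  qed
  have mf: "x!i = True \<and> (if f x then max_false n f (x[i:=False]) else max_false n f x)"
    if "max_false n f0 x" for x
  proof -
    have xp: "x \<in> points n" and fx0: "\<not> f0 x" and mx: "\<forall>y\<in>points n. \<not> f0 y \<and> leq x y \<longrightarrow> y = x"
      using that by (auto simp: max_false_def)
    have lx: "length x = n" using xp points_len by auto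
    have "\<not> f0 (x[i:=True])" using fx0 by (simp add: f0x)
    hence "x[i:=True] = x" using mx xp leq_updT by auto
    hence xi: "x!i = True" using upd_eq_nth ilt lx by metis
    have nf: "\<not> f (x[i:=False])" using fx0 f0x by auto
    show ?thesis
    proof (cases "f x")
      case True
      have "max_false n f (x[i:=False])"
        unfolding max_false_def
      proof (intro conjI ballI impI nf)
        show "x[i:=False] \<in> points n" using xp by simp
        fix y assume y: "y \<in> points n" "\<not> f y \<and> leq (x[i := False]) y"
        have ly: "length y = n" using y points_len by auto
        have yi: "y!i = False"
        proof (rule ccontr)
          assume "y!i \<noteq> False"
          hence "leq x y" using y xi lx ly by (auto simp: leq_nth split: if_splits)
          thus False using pos xp y True pos_mono by blast
        qed
        have "leq x (y[i:=True])" using y xi lx ly by (auto simp: leq_nth split: if_splits)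
        have yy: "y[i:=False] = y" using upd_same_id[of i y False] yi ly ilt by simp
        have "\<not> f0 (y[i:=True])" using y yy by (simp add: f0x)
        hence eq: "y[i:=True] = x" using mx[rule_format, of "y[i:=True]"] y \<open>leq x (y[i:=True])\<close> by simp
        have "x[i:=False] = y[i:=False]" using arg_cong[OF eq, of "\<lambda>z. z[i:=False]"] by simp
        thus "y = x[i:=False]" using yy by simp
      qed
      thus ?thesis using xi True by simp
    next
      case False
      have "max_false n f x"
        unfolding max_false_def
      proof (intro conjI ballI impI xp False)
        fix y assume y: "y \<in> points n" "\<not> f y \<and> leq x y"
        have "\<not> f (y[i:=False])" using y pos_mono[OF pos, of "y[i:=False]" y] leq_updF by auto
        hence "\<not> f0 y" using f0x by auto
        thus "y = x" using mx y by auto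
      qed
      thus ?thesis using xi False by simp
    qed
  qed
  have E0c: "min_true n f0 x \<or> max_false n f0 x" if "x \<in> E0" for x
    using that by (auto simp: E0_def extremal_points_def)
  have img: "\<phi> x \<in> extremal_points n f \<and> (f (\<phi> x) \<longrightarrow> \<not> \<phi> x ! i) \<and>
      (\<not> f (\<phi> x) \<and> \<phi> x ! i \<longrightarrow> max_false n f0 (\<phi> x)) \<and> \<psi> (\<phi> x) = x" if "x \<in> E0" for x
  proof (cases "min_true n f0 x")
    case True
    have lx: "length x = n" using True points_len by (auto simp: min_true_def)
    have xx: "x[i:=False] = x" using mt[OF True] upd_same_id[of i x False] lx ilt by simp
    show ?thesis using mt[OF True] True xx by (auto simp: \<phi>_def \<psi>_def extremal_points_def)
  next
    case False
    hence mfx: "max_false n f0 x" using E0c that by auto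
    have xp: "x \<in> points n" using mfx by (auto simp: max_false_def)
    have lx: "length x = n" using xp points_len by auto
    have nf: "\<not> f (x[i:=False])" using mfx f0x by (auto simp: max_false_def)
    have xi: "x!i" using mf[OF mfx] by auto
    have "\<not> min_true n f0 (\<phi> x)"
      using nf f0x by (auto simp: \<phi>_def min_true_def)
    moreover have "x[i:=True] = x" using upd_same_id[of i x True] xi lx ilt by simp
    ultimately have ps: "\<psi> (\<phi> x) = x"
      by (auto simp: \<psi>_def \<phi>_def)
    show ?thesis
    proof (cases "f x")
      case True
      thus ?thesis using mf[OF mfx] ps nf lx ilt by (auto simp: \<phi>_def extremal_points_def)
    next
      case False
      thus ?thesis using mf[OF mfx] ps mfx by (auto simp: \<phi>_def extremal_points_def)
    qed
  qed
  have inj: "inj_on \<phi> E0" using img by (metis inj_on_inverseI)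
  have sub: "\<phi> ` E0 \<subseteq> extremal_points n f" using img by auto
  have disj: "\<phi> ` E0 \<inter> U = {}"
  proof (rule ccontr)
    assume "\<phi> ` E0 \<inter> U \<noteq> {}"
    then obtain x where x: "x \<in> E0" "\<phi> x \<in> U" by auto
    have "(\<phi> x)!i \<and> (f (\<phi> x) \<or> \<not> max_false n f0 (\<phi> x))" using Uc x f0_def by auto
    thus False using img[OF x(1)] by auto
  qed
  have fin: "finite (extremal_points n f)" by (rule ext_finite)
  have "card (\<phi> ` E0 \<union> U) \<le> card (extremal_points n f)"
    using sub U fin by (intro card_mono) auto
  moreover have "card (\<phi> ` E0 \<union> U) = card E0 + card U"
    using disj inj card_image[OF inj] fin U sub
    by (metis card_Un_disjoint finite_subset)
  ultimately show ?thesis by (simp add: E0_def f0_def)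
qed

definition irr :: "nat \<Rightarrow> (bool list \<Rightarrow> bool) \<Rightarrow> nat \<Rightarrow> nat \<Rightarrow> bool" where
  "irr n f i j \<longleftrightarrow> (\<forall>x\<in>points n. f (x[j:=False, i:=False]) = f (x[j:=True, i:=False]))"

lemma rel_restrF_irr: "j < n \<Longrightarrow> relevant n (restr f i False) j \<longleftrightarrow> \<not> irr n f i j"
  by (auto simp: relevant_def irr_def restr_def)

lemma irr_use:
  assumes "irr n f i j" "i \<noteq> j" "y \<in> points n" "y!i = False" "i < n"
  shows "f (y[j:=b]) = f y"
proof -
  have ly: "length y = n" using assms points_len by auto
  have yi: "y[i:=False] = y" using upd_same_id[of i y False] assms ly by simp
  have e: "y[j:=c, i:=False] = y[j:=c]" for c
    using assms(2) yi by (metis list_update_swap)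
  have "f (y[j:=False]) = f (y[j:=True])" using assms(1,3) e unfolding irr_def by metis
  moreover have "y = y[j:=y!j]" by simp
  ultimately show ?thesis by (cases b; cases "y!j") metis+
qed

lemma irr_trans:
  assumes pos: "positive n f" and ij: "irr n f i j" and jl: "irr n f j l"
    and d: "i \<noteq> j" "j \<noteq> l" "i \<noteq> l" and lt: "i < n" "j < n" "l < n"
  shows "irr n f i l"
  unfolding irr_def
proof
  fix x assume xp: "x \<in> points n"
  define y where "y = x[i:=False]"
  have yp: "y \<in> points n" using xp by (simp add: y_def)
  have ly: "length y = n" using yp points_len by auto
  have yi: "y!i = False" using ly lt by (simp add: y_def)
  have e: "x[l:=b, i:=False] = y[l:=b]" for b using d by (simp add: y_def list_update_swap)
  have "f (y[l:=False]) = f (y[l:=True])"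
  proof
    assume "f (y[l:=False])"
    thus "f (y[l:=True])" using pos_mono[OF pos, of "y[l:=False]" "y[l:=True]"] yp leq_upd_FT by simp
  next
    assume T: "f (y[l:=True])"
    define z where "z = y[l:=True]"
    have zp: "z \<in> points n" using yp by (simp add: z_def)
    have zi: "z!i = False" using yi ly d lt by (simp add: z_def)
    have "f (z[j:=False])" using irr_use[OF ij d(1) zp zi lt(1)] T z_def by simp
    moreover have "z[j:=False] = (y[j:=False])[l:=True]" using d by (simp add: z_def list_update_swap)
    moreover have wp: "y[j:=False] \<in> points n" using yp by simp
    moreover have wj: "(y[j:=False])!j = False" using ly lt by simp
    ultimately have "f (y[j:=False])" using irr_use[OF jl d(2) wp wj lt(2), of True] by simp
    hence "f ((y[j:=False])[l:=False])" using irr_use[OF jl d(2) wp wj lt(2), of False] by simp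
    moreover have "(y[j:=False])[l:=False] = (y[l:=False])[j:=False]" using d by (simp add: list_update_swap)
    ultimately show "f (y[l:=False])"
      using pos_mono[OF pos, of "(y[l:=False])[j:=False]" "y[l:=False]"] yp leq_updF by simp
  qed
  thus "f (x[l:=False, i:=False]) = f (x[l:=True, i:=False])" using e by simp
qed

lemma twin_rel:
  assumes ij: "irr n f i j" and ji: "irr n f j i" and d: "i \<noteq> j" and lt: "i < n" "j < n"
    and l: "relevant n f l" "l \<noteq> i"
  shows "relevant n (restr f i True) l"
proof -
  obtain x where xp: "x \<in> points n" and ll: "l < n" and xd: "f (x[l:=False]) \<noteq> f (x[l:=True])"
    using l by (auto simp: relevant_def restr_def)
  have lx: "length x = n" using xp points_len by auto
  show ?thesis
  proof (cases "x!i")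
    case True
    have xx: "x[i:=True] = x" using upd_same_id[of i x True] True lx lt by simp
    have e: "x[l:=b, i:=True] = x[l:=b]" for b
      using list_update_swap[OF l(2), of x b True] xx by simp
    show ?thesis unfolding relevant_def restr_def
      using xp xd ll e by (intro conjI bexI[of _ x]) auto
  next
    case False
    show ?thesis
    proof (cases "l = j")
      case True
      have "f (x[j:=b]) = f x" for b using irr_use[OF ij d xp _ lt(1)] False by simp
      thus ?thesis using xd True by simp
    next
      case lj: False
      define x' where "x' = x[j:=False]"
      have x'p: "x' \<in> points n" using xp by (simp add: x'_def)
      have v: "f (x'[l:=b, i:=True]) = f (x[l:=b])" for b
      proof -
        have p1: "x'[l:=b] \<in> points n" using x'p by simp
        have j1: "(x'[l:=b])!j = False" using lx lt lj by (simp add: x'_def)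
        have 1: "f (x'[l:=b, i:=True]) = f (x'[l:=b])" using irr_use[OF ji _ p1 j1 lt(2)] d by simp
        have 2: "x'[l:=b] = (x[l:=b])[j:=False]" using lj by (simp add: x'_def list_update_swap)
        have 3: "f ((x[l:=b])[j:=False]) = f (x[l:=b])"
          using irr_use[OF ij d _ _ lt(1)] xp False lx lt l(2) by simp
        show ?thesis using 1 2 3 by simp
      qed
      show ?thesis unfolding relevant_def restr_def
        using x'p xd ll v by (intro conjI bexI[of _ x']) auto
    qed
  qed
qed

lemma exists_good:
  assumes pos: "positive n f" and ne: "{j. relevant n f j} \<noteq> {}"
  shows "\<exists>i a. relevant n f i \<and> {j. relevant n (restr f i a) j} = {j. relevant n f j} - {i}"
proof -
  define V where "V = {j. relevant n f j}"
  have Vlt: "j \<in> V \<Longrightarrow> j < n" for j by (auto simp: V_def relevant_def)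
  have finV: "finite V" using Vlt by (intro finite_subset[of V "{..<n}"]) auto
  have sub: "{j. relevant n (restr f i a) j} \<subseteq> V - {i}" for i a
    using relevant_restr_sub unfolding V_def by blast
  define D where "D = (\<lambda>i. {j\<in>V. j \<noteq> i \<and> irr n f i j})"
  show ?thesis
  proof (cases "\<exists>i\<in>V. D i = {}")
    case True
    then obtain i where i: "i \<in> V" "D i = {}" by blast
    have "V - {i} \<subseteq> {j. relevant n (restr f i False) j}"
    proof
      fix l assume l: "l \<in> V - {i}"
      hence "\<not> irr n f i l" using i(2) unfolding D_def by blast
      thus "l \<in> {j. relevant n (restr f i False) j}" using rel_restrF_irr[of l n f i] Vlt l by blast
    qed
    thus ?thesis using sub[of i False] i unfolding V_def by blast
  next
    case False
    obtain i0 where "i0 \<in> V" using ne V_def by blast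
    then obtain i where i: "i \<in> V" and imin: "\<forall>i'. i' \<in> V \<longrightarrow> card (D i) \<le> card (D i')"
      using ex_has_least_nat[of "\<lambda>i. i \<in> V" i0 "\<lambda>i. card (D i)"] by blast
    obtain j where j: "j \<in> D i" using False i by blast
    have jV: "j \<in> V" and ji: "j \<noteq> i" and irrij: "irr n f i j" using j by (auto simp: D_def)
    have finD: "finite (D k)" for k using finV by (simp add: D_def)
    have irrji: "irr n f j i"
    proof (rule ccontr)
      assume nji: "\<not> irr n f j i"
      have "D j \<subseteq> D i - {j}"
      proof
        fix l assume l: "l \<in> D j"
        hence lV: "l \<in> V" and lj: "l \<noteq> j" and jl: "irr n f j l" by (auto simp: D_def)
        have li: "l \<noteq> i" using nji jl by auto
        have "irr n f i l" using irr_trans[OF pos irrij jl ji[symmetric] lj[symmetric] li[symmetric] Vlt[OF i] Vlt[OF jV] Vlt[OF lV]] .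
        thus "l \<in> D i - {j}" using lV li lj by (auto simp: D_def)
      qed
      hence "card (D j) \<le> card (D i - {j})" using finD by (intro card_mono) auto
      also have "\<dots> < card (D i)" using card_Diff1_less[OF finD j] .
      finally show False using imin jV by fastforce
    qed
    have "V - {i} \<subseteq> {j. relevant n (restr f i True) j}"
      using twin_rel[OF irrij irrji] ji Vlt i jV unfolding V_def by auto
    thus ?thesis using sub[of i True] i unfolding V_def by blast
  qed
qed

lemma rel_min_true:
  assumes pos: "positive n f" and rel: "relevant n f i"
  shows "\<exists>m. min_true n f m \<and> m!i"
proof -
  obtain x where xp: "x \<in> points n" and il: "i < n" and xd: "f (x[i:=False]) \<noteq> f (x[i:=True])"
    using rel by (auto simp: relevant_def restr_def)
  have "\<not> f (x[i:=False]) \<or> f (x[i:=True])"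
    using pos_mono[OF pos, of "x[i:=False]" "x[i:=True]"] xp leq_upd_FT by auto
  hence T: "f (x[i:=True])" and F: "\<not> f (x[i:=False])" using xd by auto
  obtain m where m: "min_true n f m" "leq m (x[i:=True])" using min_true_exists[of f "x[i:=True]" n] T xp by auto
  have mp: "m \<in> points n" using m by (auto simp: min_true_def)
  have "m!i"
  proof (rule ccontr)
    assume "\<not> m!i"
    hence "leq m (x[i:=False])" using m(2) by (auto simp: leq_nth split: if_splits)
    thus False using pos_mono[OF pos mp, of "x[i:=False]"] xp F m(1) by (auto simp: min_true_def)
  qed
  thus ?thesis using m by blast
qed

lemma step0:
  assumes pos: "positive n f" and rel: "relevant n f i"
  shows "card (extremal_points n (restr f i False)) + 1 \<le> card (extremal_points n f)"
proof -
  obtain m where m: "min_true n f m" "m!i" using rel_min_true[OF pos rel] by blast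
  have il: "i < n" using rel by (auto simp: relevant_def)
  have "card (extremal_points n (restr f i False)) + card {m} \<le> card (extremal_points n f)"
    using m by (intro step0_gen[OF pos il]) (auto simp: extremal_points_def min_true_def)
  thus ?thesis by simp
qed

lemma step1:
  assumes pos: "positive n f" and rel: "relevant n f i"
  shows "card (extremal_points n (restr f i True)) + 1 \<le> card (extremal_points n f)"
proof -
  have "card (extremal_points n (restr (dual f) i False)) + 1 \<le> card (extremal_points n (dual f))"
    using step0[OF positive_dual[OF pos]] rel by simp
  thus ?thesis by (simp add: restr_dual)
qed

lemma noncanal_facts:
  assumes nc: "\<not> canalyzing n f" and kl: "k < n"
  shows "\<exists>x\<in>points n. \<not> f (x[k:=True])" "\<exists>x\<in>points n. f (x[k:=False])"
proof -
  have "\<not> const_on n (restr f k True)" "\<not> const_on n (restr f k False)"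
    using nc kl by (auto simp: canalyzing_def)
  show "\<exists>x\<in>points n. \<not> f (x[k:=True])"
  proof (rule ccontr)
    assume "\<not> ?thesis"
    hence "\<forall>x\<in>points n. restr f k True x = True" by (simp add: restr_def)
    hence "const_on n (restr f k True)" unfolding const_on_def by blast
    thus False using \<open>\<not> const_on n (restr f k True)\<close> by simp
  qed
  show "\<exists>x\<in>points n. f (x[k:=False])"
  proof (rule ccontr)
    assume "\<not> ?thesis"
    hence "\<forall>x\<in>points n. restr f k False x = False" by (simp add: restr_def)
    hence "const_on n (restr f k False)" unfolding const_on_def by blast
    thus False using \<open>\<not> const_on n (restr f k False)\<close> by simp
  qed
qed

lemma Q0:
  assumes pos: "positive n f" and nc: "\<not> canalyzing n f" and rel: "relevant n f i"
    and c0: "canalyzing n (restr f i False)"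
  shows "card (extremal_points n (restr f i False)) + 2 \<le> card (extremal_points n f)"
proof -
  have il: "i < n" using rel by (auto simp: relevant_def)
  define f0 where "f0 = restr f i False"
  obtain j b where jl: "j < n" and cj: "const_on n (restr f0 j b)"
    using c0 unfolding canalyzing_def f0_def by (metis (full_types))
  have ji: "j \<noteq> i"
  proof
    assume "j = i"
    hence "const_on n (restr f i False)" using cj by (simp add: f0_def)
    thus False using nc il by (auto simp: canalyzing_def)
  qed
  obtain c where c: "\<forall>x\<in>points n. f (x[j:=b, i:=False]) = c"
    using cj by (auto simp: const_on_def f0_def restr_def)
  have sw: "x[j:=b', i:=False] = x[i:=False, j:=b']" for x b' using ji by (simp add: list_update_swap)
  have key: "\<not> f (x[j:=False, i:=False])" if xp: "x \<in> points n" for x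
  proof (cases b)
    case True
    show ?thesis
    proof (cases c)
      case True
      obtain y where y: "y \<in> points n" "\<not> f (y[j:=True])" using noncanal_facts[OF nc jl] by blast
      have "f (y[j:=True, i:=False])" using c y \<open>b\<close> True by auto
      moreover have "leq (y[j:=True, i:=False]) (y[j:=True])" by (rule leq_updF)
      ultimately show ?thesis using pos_mono[OF pos, of "y[j:=True, i:=False]" "y[j:=True]"] y by simp
    next
      case False
      obtain y where y: "y \<in> points n" "f (y[i:=False])" using noncanal_facts[OF nc il] by blast
      have "\<not> f (y[j:=True, i:=False])" using c y \<open>b\<close> False by auto
      moreover have "leq (y[i:=False]) (y[j:=True, i:=False])" using sw[of y True] leq_updT by simp
      ultimately show ?thesis using pos_mono[OF pos, of "y[i:=False]" "y[j:=True, i:=False]"] y by simp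
    qed
  next
    case False
    show ?thesis
    proof (cases c)
      case True
      obtain y where y: "y \<in> points n" "\<not> f (y[i:=True])" using noncanal_facts[OF nc il] by blast
      have "f (y[j:=False, i:=False])" using c y \<open>\<not>b\<close> True by auto
      moreover have "leq (y[j:=False, i:=False]) (y[i:=True])"
        using y by (auto simp: leq_nth points_def split: if_splits)
      ultimately show ?thesis using pos_mono[OF pos, of "y[j:=False, i:=False]" "y[i:=True]"] y by simp
    next
      case False
      thus ?thesis using c xp \<open>\<not>b\<close> by auto
    qed
  qed
  have KEY: "\<not> f y" if "y \<in> points n" "\<not> y!i" "\<not> y!j" for y
  proof -
    have ly: "length y = n" using that points_len by auto
    have "y[j:=False] = y" using that ly jl upd_same_id[of j y False] by simp
    moreover have "y[i:=False] = y" using that ly il upd_same_id[of i y False] by simp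
    ultimately have "y[j:=False, i:=False] = y" by simp
    thus ?thesis using key[OF that(1)] by simp
  qed
  obtain z where zp: "z \<in> points n" and fz: "f (z[j:=False])" using noncanal_facts[OF nc jl] by blast
  obtain S where S: "min_true n f S" "leq S (z[j:=False])"
    using min_true_exists[of f "z[j:=False]" n] fz zp by auto
  have Sp: "S \<in> points n" and fS: "f S" using S by (auto simp: min_true_def)
  have lS: "length S = n" using Sp points_len by auto
  have Sj: "\<not> S!j" using S(2) jl lS by (auto simp: leq_nth)
  have Si: "S!i" using KEY[OF Sp _ Sj] fS by blast
  have SE: "S \<in> extremal_points n f" using S by (auto simp: extremal_points_def)
  show ?thesis
  proof (cases "\<exists>S'. min_true n f S' \<and> S'!i \<and> S' \<noteq> S")
    case True
    then obtain S' where S': "min_true n f S'" "S'!i" "S' \<noteq> S" by blast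
    have "card (extremal_points n (restr f i False)) + card {S, S'} \<le> card (extremal_points n f)"
      using S' SE Si fS by (intro step0_gen[OF pos il]) (auto simp: extremal_points_def min_true_def)
    thus ?thesis using S'(3) by simp
  next
    case False
    hence uniq: "\<And>R. min_true n f R \<Longrightarrow> R!i \<Longrightarrow> R = S" by blast
    have "\<exists>s. s < n \<and> s \<noteq> i \<and> S!s"
    proof (rule ccontr)
      assume "\<not> ?thesis"
      hence ns: "\<forall>s<n. s \<noteq> i \<longrightarrow> \<not> S!s" by blast
      obtain y where y: "y \<in> points n" "\<not> f (y[i:=True])" using noncanal_facts[OF nc il] by blast
      have "leq S (y[i:=True])" using ns y lS by (auto simp: leq_nth points_def)
      thus False using pos_mono[OF pos Sp, of "y[i:=True]"] y fS by simp
    qed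
    then obtain s where s: "s < n" "s \<noteq> i" "S!s" by blast
    have sj: "s \<noteq> j" using s(3) Sj by auto
    define one where "one = replicate n True"
    define p where "p = one[j:=False, s:=False]"
    have onep: "one \<in> points n" by (simp add: one_def points_def)
    have pp: "p \<in> points n" by (simp add: p_def one_def points_def)
    have lp: "length p = n" using pp points_len by auto
    have pnth: "p!k = (k \<noteq> j \<and> k \<noteq> s)" if "k < n" for k
      using that by (simp add: p_def one_def)
    have pi: "p!i" using pnth[OF il] ji s(2) by simp
    have fp: "\<not> f p"
    proof
      assume "f p"
      then obtain R where R: "min_true n f R" "leq R p" using min_true_exists[of f p n] pp by auto
      have Rp: "R \<in> points n" and fR: "f R" using R by (auto simp: min_true_def)
      have lR: "length R = n" using Rp points_len by auto
      have "\<not> R!j" "\<not> R!s" using R(2) pnth jl s(1) lR by (auto simp: leq_nth)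
      moreover have "R!i" using KEY[OF Rp] fR \<open>\<not> R!j\<close> by blast
      ultimately show False using uniq[OF R(1)] s(3) by simp
    qed
    have f1s: "f (one[s:=False])"
    proof -
      obtain x where x: "x \<in> points n" "f (x[s:=False])" using noncanal_facts[OF nc s(1)] by blast
      have "leq (x[s:=False]) (one[s:=False])" using x by (auto simp: leq_nth one_def points_def)
      thus ?thesis using pos_mono[OF pos, of "x[s:=False]" "one[s:=False]"] x onep by simp
    qed
    have f1j: "f (one[j:=False])"
    proof -
      have "leq S (one[j:=False])" using Sj lS by (auto simp: leq_nth one_def)
      thus ?thesis using pos_mono[OF pos Sp, of "one[j:=False]"] onep fS by simp
    qed
    have mfp: "max_false n f p"
      unfolding max_false_def
    proof (intro conjI ballI impI pp fp)
      fix y assume y: "y \<in> points n" "\<not> f y \<and> leq p y"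
      have ly: "length y = n" using y points_len by auto
      have yk: "y!k" if "k < n" "k \<noteq> j" "k \<noteq> s" for k
        using y that pnth lp by (auto simp: leq_nth)
      have yj: "\<not> y!j"
      proof
        assume "y!j"
        hence "leq (one[s:=False]) y" using yk ly by (auto simp: leq_nth one_def)
        thus False using pos_mono[OF pos, of "one[s:=False]" y] onep y f1s by simp
      qed
      have ys: "\<not> y!s"
      proof
        assume "y!s"
        hence "leq (one[j:=False]) y" using yk ly by (auto simp: leq_nth one_def)
        thus False using pos_mono[OF pos, of "one[j:=False]" y] onep y f1j by simp
      qed
      show "y = p"
      proof (rule nth_equalityI)
        show "length y = length p" using ly lp by simp
        fix k assume "k < length y"
        thus "y!k = p!k" using yk yj ys pnth ly by (cases "k = j"; cases "k = s") auto
      qed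
    qed
    have nmf0: "\<not> max_false n f0 p"
    proof
      assume m: "max_false n f0 p"
      have q: "p[s:=True] \<in> points n" using pp by simp
      have "leq p (p[s:=True])" by (rule leq_updT)
      moreover have "\<not> f0 (p[s:=True])"
      proof -
        have "p[s:=True, i:=False] \<in> points n" using pp by simp
        moreover have "\<not> (p[s:=True, i:=False])!i" "\<not> (p[s:=True, i:=False])!j"
          using lp il jl sj ji pnth[OF jl] by auto
        ultimately show ?thesis using KEY by (simp add: f0_def restr_def)
      qed
      ultimately have "p[s:=True] = p" using m q by (auto simp: max_false_def)
      hence "p!s" using upd_eq_nth lp s(1) by metis
      thus False using pnth[OF s(1)] by simp
    qed
    have pE: "p \<in> extremal_points n f" using mfp by (simp add: extremal_points_def)
    have "card (extremal_points n (restr f i False)) + card {S, p} \<le> card (extremal_points n f)"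
      using SE pE Si fS pi nmf0 by (intro step0_gen[OF pos il]) (auto simp: f0_def)
    moreover have "S \<noteq> p" using fS fp by auto
    ultimately show ?thesis by simp
  qed
qed

lemma Q1:
  assumes pos: "positive n f" and nc: "\<not> canalyzing n f" and rel: "relevant n f i"
    and c1: "canalyzing n (restr f i True)"
  shows "card (extremal_points n (restr f i True)) + 2 \<le> card (extremal_points n f)"
proof -
  have "card (extremal_points n (restr (dual f) i False)) + 2 \<le> card (extremal_points n (dual f))"
    using Q0[OF positive_dual[OF pos]] nc rel c1 by (simp add: restr_dual)
  thus ?thesis by (simp add: restr_dual)
qed

lemma finite_rel: "finite {i. relevant n f i}"
  by (rule finite_subset[of _ "{..<n}"]) (auto simp: relevant_def)

lemma ext_nonempty: "extremal_points n f \<noteq> {}"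
proof -
  define one where "one = replicate n (True)"
  have op: "one \<in> points n" by (simp add: one_def points_def)
  show ?thesis
  proof (cases "f one")
    case True
    then obtain m where "min_true n f m" using min_true_exists[of f one n] op by auto
    thus ?thesis by (auto simp: extremal_points_def)
  next
    case False
    have "max_false n f one"
      unfolding max_false_def
    proof (intro conjI ballI impI op False)
      fix y assume y: "y \<in> points n" "\<not> f y \<and> leq one y"
      show "y = one"
        using y by (intro nth_equalityI) (auto simp: leq_nth one_def)
    qed
    thus ?thesis by (auto simp: extremal_points_def)
  qed
qed

lemma gen_bound:
  "positive n f \<Longrightarrow> card {i. relevant n f i} + 1 \<le> card (extremal_points n f)"
proof (induction "card {i. relevant n f i}" arbitrary: f)
  case 0
  have "card (extremal_points n f) \<noteq> 0" using ext_nonempty ext_finite by auto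
  thus ?case using 0 by simp
next
  case (Suc k)
  have "{i. relevant n f i} \<noteq> {}" using Suc.hyps(2) by (metis card.empty Zero_not_Suc)
  then obtain i a where i: "relevant n f i" and ra: "{j. relevant n (restr f i a) j} = {j. relevant n f j} - {i}"
    using exists_good[OF Suc.prems] by blast
  have "card {j. relevant n (restr f i a) j} = k" using ra i Suc.hyps(2) finite_rel by simp
  hence IH: "k + 1 \<le> card (extremal_points n (restr f i a))"
    using Suc.hyps(1)[of "restr f i a"] positive_restr[OF Suc.prems] by simp
  have "card (extremal_points n (restr f i a)) + 1 \<le> card (extremal_points n f)"
    using step0[OF Suc.prems i] step1[OF Suc.prems i] by (cases a) auto
  thus ?case using IH Suc.hyps(2) by simp
qed

lemma const_if_no_rel:
  assumes "\<forall>i. \<not> relevant n f i"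
  shows "\<forall>x\<in>points n. f x = f (replicate n True)"
proof -
  have "x \<in> points n \<longrightarrow> f x = f (replicate n True)" if "n - cnt x = m" for m x
    using that
  proof (induction m arbitrary: x rule: less_induct)
    case (less m)
    show ?case
    proof
      assume xp: "x \<in> points n"
      have lx: "length x = n" using xp points_len by auto
      show "f x = f (replicate n True)"
      proof (cases "\<forall>k<n. x!k")
        case True
        hence "x = replicate n True" using lx by (intro nth_equalityI) auto
        thus ?thesis by simp
      next
        case False
        then obtain k where k: "k < n" "\<not> x!k" by blast
        have xk: "x[k:=False] = x" using upd_same_id[of k x False] k lx by simp
        have "\<not> relevant n f k" using assms by blast
        hence "f (x[k:=False]) = f (x[k:=True])" using xp k by (auto simp: relevant_def restr_def)
        hence e: "f x = f (x[k:=True])" using xk by simp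
        have ne: "x \<noteq> x[k:=True]" using k lx by (metis nth_list_update_eq)
        have "cnt x < cnt (x[k:=True])" using leq_cnt_less[OF leq_updT ne] .
        moreover have "cnt (x[k:=True]) \<le> n"
          using lx by (simp add: cnt_def) (metis length_filter_le length_list_update)
        ultimately have "n - cnt (x[k:=True]) < m" using less.prems by simp
        hence "f (x[k:=True]) = f (replicate n True)" using less.IH[OF _ refl] xp by simp
        thus ?thesis using e by simp
      qed
    qed
  qed
  thus ?thesis by blast
qed

lemma noncanal_rel:
  assumes nc: "\<not> canalyzing n f" and n: "0 < n"
  shows "\<exists>i. relevant n f i"
proof (rule ccontr)
  assume "\<not> ?thesis"
  hence c: "\<forall>x\<in>points n. f x = f (replicate n True)" using const_if_no_rel by blast
  have "const_on n (restr f 0 False)" unfolding const_on_def restr_def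
    using c by (intro exI[of _ "f (replicate n True)"]) simp
  thus False using nc n by (auto simp: canalyzing_def)
qed

lemma nc_bound:
  "positive n f \<Longrightarrow> \<not> canalyzing n f \<Longrightarrow> 0 < n \<Longrightarrow> card {i. relevant n f i} + 2 \<le> card (extremal_points n f)"
proof (induction "card {i. relevant n f i}" arbitrary: f)
  case 0
  obtain i where "relevant n f i" using noncanal_rel[OF 0(3,4)] by blast
  thus ?case using 0(1) finite_rel by auto
next
  case (Suc k)
  have "{i. relevant n f i} \<noteq> {}" using Suc.hyps(2) by (metis card.empty Zero_not_Suc)
  then obtain i a where i: "relevant n f i" and ra: "{j. relevant n (restr f i a) j} = {j. relevant n f j} - {i}"
    using exists_good[OF Suc.prems(1)] by blast
  have ck: "card {j. relevant n (restr f i a) j} = k" using ra i Suc.hyps(2) finite_rel by simp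
  have pa: "positive n (restr f i a)" using positive_restr[OF Suc.prems(1)] .
  show ?case
  proof (cases "canalyzing n (restr f i a)")
    case True
    have "card (extremal_points n (restr f i a)) + 2 \<le> card (extremal_points n f)"
      using Q0[OF Suc.prems(1,2) i] Q1[OF Suc.prems(1,2) i] True by (cases a) auto
    moreover have "k + 1 \<le> card (extremal_points n (restr f i a))" using gen_bound[OF pa] ck by simp
    ultimately show ?thesis using Suc.hyps(2) by simp
  next
    case False
    have IH: "k + 2 \<le> card (extremal_points n (restr f i a))"
      using Suc.hyps(1)[of "restr f i a"] pa False Suc.prems(3) ck by simp
    have "card (extremal_points n (restr f i a)) + 1 \<le> card (extremal_points n f)"
      using step0[OF Suc.prems(1) i] step1[OF Suc.prems(1) i] by (cases a) auto
    thus ?thesis using IH Suc.hyps(2) by simp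
  qed
qed

theorem mainTheorem11:
  fixes n k :: nat and f :: "bool list \<Rightarrow> bool"
  assumes "positive n f"
    and "\<not> canalyzing n f"
    and "card {i. relevant n f i} = k"
    and "\<exists>i<n. \<not> canalyzing n (restr f i False) \<or> \<not> canalyzing n (restr f i True)"
  shows "card (extremal_points n f) \<ge> k + 2"
proof -
  have "0 < n" using assms(4) by auto
  thus ?thesis using nc_bound[OF assms(1,2)] assms(3) by simp
qed

end
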